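(* Suppose $(f_1,\dots,f_K,L^{\mathrm{same}})$ and $(\hat f_1,\dots,\hat f_K,\hat L^{\mathrm{same}})$ both arise from the construction below (with the same dataset size $N$, possibly different subpopulations and learning algorithms), and both satisfy the Conservation Condition, i.e. $(f_1,\dots,f_K)=\nabla L^{\mathrm{same}}$ and $(\hat f_1,\dots,\hat f_K)=\nabla\hat L^{\mathrm{same}}$ on $\mathbb{R}^K_{\ge0}\setminus\{\mathbf{0}\}$. If $f_i=\hat f_i$ for some $i\in[K]$, then for every $k\neq i$ there is a constant $C_k$ with $f_k({\bm{p}})=\hat f_k({\bm{p}})+C_k$ for all ${\bm{p}}\in\mathbb{R}^K_{\ge0}\setminus\{\mathbf{0}\}$.
   Context: Construction: given distributions $\mathcal{D}_1,\dots,\mathcal{D}_K$ on $\mathcal{Z}$, a loss $\ell(h,{\bm{z}})$ (all expectations finite), and a learning algorithm $\mathcal{A}:\mathcal{Z}^N\to\mathcal{H}$, for ${\bm{r}}\in\Delta_K=\{{\bm{r}}\ge0:\sum_kr_k=1\}$ let $\bar e_k({\bm{r}})=\mathbb{E}_{S\sim(\sum_jr_j\mathcal{D}_j)^N}\mathbb{E}_{{\bm{z}}\sim\mathcal{D}_k}[\ell(\mathcal{A}(S),{\bm{z}})]$, $f_k({\bm{p}})=\bar e_k({\bm{p}}/|{\bm{p}}|)$ for ${\bm{p}}\in\mathbb{R}^K_{\ge0}\setminus\{\mathbf{0}\}$ with $|{\bm{p}}|=\sum_jp_j$, and $L^{\mathrm{same}}({\bm{p}})=\sum_kp_kf_k({\bm{p}})$.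 *)

theory Defs
  imports "HOL-Probability.Probability"
begin

text \<open>Subpopulations are indexed by a finite type 'k (so K = CARD('k)); vectors
  p in R^K are elements of real^'k.  Data points live in a measurable space Mz;
  datasets of size N are functions nat => 'z on the index set {..<N}.\<close>

definition prob_simplex :: "(real^'k::finite) set" where
  "prob_simplex = {r. (\<forall>j. 0 \<le> r $ j) \<and> (\<Sum>j\<in>UNIV. r $ j) = 1}"

definition nonneg_nonzero :: "(real^'k::finite) set" where
  "nonneg_nonzero = {p. (\<forall>j. 0 \<le> p $ j) \<and> p \<noteq> 0}"

definition mixture :: "'z measure \<Rightarrow> ('k::finite \<Rightarrow> 'z measure) \<Rightarrow> real^'k \<Rightarrow> 'z measure" where
  "mixture Mz D r = measure_of (space Mz) (sets Mz)
      (\<lambda>B. \<Sum>j\<in>UNIV. ennreal (r $ j) * emeasure (D j) B)"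

definition ebar :: "'z measure \<Rightarrow> ('k::finite \<Rightarrow> 'z measure) \<Rightarrow> ('h \<Rightarrow> 'z \<Rightarrow> real)
     \<Rightarrow> ((nat \<Rightarrow> 'z) \<Rightarrow> 'h) \<Rightarrow> nat \<Rightarrow> 'k \<Rightarrow> real^'k \<Rightarrow> real" where
  "ebar Mz D loss A N k r =
     (\<integral>S. (\<integral>z. loss (A S) z \<partial>(D k)) \<partial>(PiM {..<N} (\<lambda>_. mixture Mz D r)))"

definition fk :: "'z measure \<Rightarrow> ('k::finite \<Rightarrow> 'z measure) \<Rightarrow> ('h \<Rightarrow> 'z \<Rightarrow> real)
     \<Rightarrow> ((nat \<Rightarrow> 'z) \<Rightarrow> 'h) \<Rightarrow> nat \<Rightarrow> 'k \<Rightarrow> real^'k \<Rightarrow> real" where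
  "fk Mz D loss A N k p = ebar Mz D loss A N k ((1 / (\<Sum>j\<in>UNIV. p $ j)) *\<^sub>R p)"

definition Lsame :: "('k::finite \<Rightarrow> real^'k \<Rightarrow> real) \<Rightarrow> real^'k \<Rightarrow> real" where
  "Lsame f p = (\<Sum>k\<in>UNIV. p $ k * f k p)"

definition valid_construction :: "'z measure \<Rightarrow> ('k::finite \<Rightarrow> 'z measure) \<Rightarrow> ('h \<Rightarrow> 'z \<Rightarrow> real)
     \<Rightarrow> ((nat \<Rightarrow> 'z) \<Rightarrow> 'h) \<Rightarrow> nat \<Rightarrow> bool" where
  "valid_construction Mz D loss A N \<longleftrightarrow>
     (\<forall>k. prob_space (D k) \<and> sets (D k) = sets Mz) \<and>
     (\<forall>r\<in>prob_simplex. \<forall>k.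
        (\<forall>S\<in>space (PiM {..<N} (\<lambda>_. mixture Mz D r)). integrable (D k) (\<lambda>z. loss (A S) z)) \<and>
        integrable (PiM {..<N} (\<lambda>_. mixture Mz D r)) (\<lambda>S. \<integral>z. loss (A S) z \<partial>(D k)))"

text \<open>Conservation Condition: (f_1,...,f_K) is the gradient of L^same at every point of
  R^K_{>=0} \ {0} (derivative taken within that domain, i.e. one-sided on the boundary).\<close>
definition conservation :: "('k::finite \<Rightarrow> real^'k \<Rightarrow> real) \<Rightarrow> bool" where
  "conservation f \<longleftrightarrow>
     (\<forall>p\<in>nonneg_nonzero. (Lsame f has_derivative (\<lambda>h. (\<chi> k. f k p) \<bullet> h)) (at p within nonneg_nonzero))"

end

theory Submission
  imports Defs
begin

lemma nn_add:
  fixes x y :: "real^'k::finite"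
  assumes "x \<in> nonneg_nonzero" "\<forall>j. 0 \<le> y $ j"
  shows "x + y \<in> nonneg_nonzero"
proof -
  have xn: "\<forall>j. 0 \<le> x $ j" "x \<noteq> 0" using assms(1) by (auto simp: nonneg_nonzero_def)
  have "x + y \<noteq> 0"
  proof
    assume "x + y = 0"
    then have "\<forall>j. x $ j + y $ j = 0" by (simp add: vec_eq_iff)
    then have "\<forall>j. x $ j = 0" using xn assms(2) by (metis add_nonneg_eq_0_iff)
    then show False using xn by (simp add: vec_eq_iff)
  qed
  then show ?thesis using xn assms(2) by (simp add: nonneg_nonzero_def)
qed

lemma nn_scale:
  fixes x :: "real^'k::finite"
  assumes "x \<in> nonneg_nonzero" "t > 0"
  shows "t *\<^sub>R x \<in> nonneg_nonzero"
  using assms by (auto simp: nonneg_nonzero_def)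

lemma axis_nn: "(axis i (1::real) :: real^'k::finite) \<in> nonneg_nonzero"
  by (auto simp: nonneg_nonzero_def axis_def vec_eq_iff)

lemma fk_hom:
  assumes "t > 0"
  shows "fk Mz D loss A N k (t *\<^sub>R p) = fk Mz D loss A N k p"
proof -
  have "(\<Sum>j\<in>UNIV. (t *\<^sub>R p) $ j) = t * (\<Sum>j\<in>UNIV. p $ j)"
    by (simp add: sum_distrib_left)
  then have "(1 / (\<Sum>j\<in>UNIV. (t *\<^sub>R p) $ j)) *\<^sub>R (t *\<^sub>R p) = (1 / (\<Sum>j\<in>UNIV. p $ j)) *\<^sub>R p"
    using assms by simp
  then show ?thesis unfolding fk_def by (simp only:)
qed

lemma dir_lemma:
  fixes F :: "real^'k::finite \<Rightarrow> real"
  assumes der: "(F has_derivative (\<lambda>h. v \<bullet> h)) (at q within S)"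
    and inS: "\<And>t. t \<in> {0..1} \<Longrightarrow> q + t *\<^sub>R d \<in> S"
    and lin: "\<And>t. t \<in> {0..1} \<Longrightarrow> F (q + t *\<^sub>R d) = a + t * b"
  shows "b = v \<bullet> d"
proof -
  have l: "((\<lambda>t::real. q + t *\<^sub>R d) has_derivative (\<lambda>h. h *\<^sub>R d)) (at 0 within {0..1})"
    by (auto intro!: derivative_eq_intros)
  have d1: "((\<lambda>t. F (q + t *\<^sub>R d)) has_derivative (\<lambda>h. v \<bullet> (h *\<^sub>R d))) (at 0 within {0..1})"
    using has_derivative_subset[OF der] inS
    by (intro has_derivative_in_compose[OF l]) (auto intro: has_derivative_subset[OF der])
  have d2: "((\<lambda>t. a + t * b) has_derivative (\<lambda>h. h * b)) (at 0 within {0..1})"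
    by (auto intro!: derivative_eq_intros)
  have d2': "((\<lambda>t. F (q + t *\<^sub>R d)) has_derivative (\<lambda>h. h * b)) (at 0 within {0..1})"
    by (rule has_derivative_transform[OF _ _ d2]) (auto simp: lin)
  have "(\<lambda>h. v \<bullet> (h *\<^sub>R d)) = (\<lambda>h. h * b)"
    using frechet_derivative_unique_within_closed_interval[of 0 1 0 "\<lambda>t. F (q + t *\<^sub>R d)"] d1 d2'
    by auto
  then have "v \<bullet> (1 *\<^sub>R d) = 1 * b" by metis
  then show ?thesis by simp
qed

theorem lemmaB4:
  fixes Mz :: "'z measure" and D :: "'k::finite \<Rightarrow> 'z measure"
    and loss :: "'h \<Rightarrow> 'z \<Rightarrow> real" and A :: "(nat \<Rightarrow> 'z) \<Rightarrow> 'h"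
    and Mz' :: "'y measure" and D' :: "'k \<Rightarrow> 'y measure"
    and loss' :: "'g \<Rightarrow> 'y \<Rightarrow> real" and A' :: "(nat \<Rightarrow> 'y) \<Rightarrow> 'g"
    and N :: nat and i :: 'k
  assumes "valid_construction Mz D loss A N"
    and "valid_construction Mz' D' loss' A' N"
    and "conservation (fk Mz D loss A N)"
    and "conservation (fk Mz' D' loss' A' N)"
    and "\<forall>p\<in>nonneg_nonzero. fk Mz D loss A N i p = fk Mz' D' loss' A' N i p"
  shows "\<forall>k. k \<noteq> i \<longrightarrow> (\<exists>C. \<forall>p\<in>nonneg_nonzero.
           fk Mz D loss A N k p = fk Mz' D' loss' A' N k p + C)"
proof -
  define f where "f = fk Mz D loss A N"
  define f' where "f' = fk Mz' D' loss' A' N"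
  define g where "g k p = f k p - f' k p" for k p
  define M where "M p = Lsame f p - Lsame f' p" for p
  define S :: "(real^'k) set" where "S = nonneg_nonzero"
  define e where "e = (axis i 1 :: real^'k)"
  have eS: "e \<in> S" unfolding e_def S_def by (rule axis_nn)
  have gi: "g i p = 0" if "p \<in> S" for p
    using assms(5) that unfolding g_def f_def f'_def S_def by simp
  have Mder: "(M has_derivative (\<lambda>h. (\<chi> k. g k p) \<bullet> h)) (at p within S)" if "p \<in> S" for p
  proof -
    have a: "(Lsame f has_derivative (\<lambda>h. (\<chi> k. f k p) \<bullet> h)) (at p within S)"
      using assms(3) that unfolding conservation_def f_def S_def by blast
    have b: "(Lsame f' has_derivative (\<lambda>h. (\<chi> k. f' k p) \<bullet> h)) (at p within S)"
      using assms(4) that unfolding conservation_def f'_def S_def by blast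
    have "(\<lambda>h. (\<chi> k. f k p) \<bullet> h - (\<chi> k. f' k p) \<bullet> h) = (\<lambda>h. (\<chi> k. g k p) \<bullet> h)"
    proof
      fix h
      have "(\<chi> k. g k p) = (\<chi> k. f k p) - (\<chi> k. f' k p)"
        by (simp add: vec_eq_iff g_def)
      then show "(\<chi> k. f k p) \<bullet> h - (\<chi> k. f' k p) \<bullet> h = (\<chi> k. g k p) \<bullet> h"
        by (simp add: inner_diff_left)
    qed
    then show ?thesis unfolding M_def[abs_def]
      by (rule has_derivative_eq_rhs[OF has_derivative_diff[OF a b]])
  qed
  have Mhom: "M (t *\<^sub>R p) = t * M p" if "t > 0" for t p
  proof -
    have "Lsame f (t *\<^sub>R p) = t * Lsame f p" "Lsame f' (t *\<^sub>R p) = t * Lsame f' p"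
      unfolding Lsame_def f_def f'_def by (simp_all add: fk_hom[OF that] sum_distrib_left mult.assoc)
    then show ?thesis unfolding M_def by (simp add: right_diff_distrib)
  qed
  have nonneg: "\<forall>j. 0 \<le> p $ j" if "p \<in> S" for p using that by (simp add: S_def nonneg_nonzero_def)
  have eS': "\<forall>j. 0 \<le> (s *\<^sub>R e) $ j" if "s \<ge> 0" for s
    using that by (simp add: e_def axis_def)
  have step1: "M (p + s *\<^sub>R e) = M p" if p: "p \<in> S" and s: "s \<ge> 0" for p s
  proof -
    have inS: "p + x *\<^sub>R e \<in> S" if "x \<in> {0..}" for x
      using nn_add[OF p[unfolded S_def] eS'] that by (simp add: S_def)
    have "((\<lambda>x. M (p + x *\<^sub>R e)) has_derivative (\<lambda>h. 0)) (at x within {0..})" if x: "x \<in> {0..}" for x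
    proof -
      have l: "((\<lambda>t::real. p + t *\<^sub>R e) has_derivative (\<lambda>h. h *\<^sub>R e)) (at x within {0..})"
        by (auto intro!: derivative_eq_intros)
      have "((\<lambda>t. M (p + t *\<^sub>R e)) has_derivative (\<lambda>h. (\<chi> k. g k (p + x *\<^sub>R e)) \<bullet> (h *\<^sub>R e))) (at x within {0..})"
        by (rule has_derivative_in_compose2[OF Mder _ x l]) (use inS in auto)
      moreover have "(\<lambda>h. (\<chi> k. g k (p + x *\<^sub>R e)) \<bullet> (h *\<^sub>R e)) = (\<lambda>h. 0)"
        using gi[OF inS[OF x]] by (simp add: e_def inner_axis)
      ultimately show ?thesis by simp
    qed
    then obtain c where "\<forall>x\<in>{0..}. M (p + x *\<^sub>R e) = c"
      using has_derivative_zero_constant[of "{0::real..}"] by (metis convex_real_interval(1))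
    then show ?thesis using s by (metis atLeast_iff order_refl scale_zero_left add_0_right)
  qed
  have Me: "M e = 0"
  proof -
    have "M (e + 1 *\<^sub>R e) = M e" by (rule step1[OF eS]) simp
    moreover have "e + 1 *\<^sub>R e = 2 *\<^sub>R e" by (simp add: scaleR_2)
    ultimately have "M e = 2 * M e" using Mhom[of 2 e] by simp
    then show ?thesis by simp
  qed
  define c where "c = (\<chi> k. g k e)"
  have Mlin: "M p = c \<bullet> p" if p: "p \<in> S" for p
  proof (rule dir_lemma[OF Mder[OF eS, folded c_def], where a = 0])
    show "e + t *\<^sub>R p \<in> S" if "t \<in> {0..1}" for t
      using nn_add[OF eS[unfolded S_def], of "t *\<^sub>R p"] nonneg[OF p] that by (simp add: S_def)
    show "M (e + t *\<^sub>R p) = 0 + t * M p" if t: "t \<in> {0..1}" for t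
    proof (cases "t = 0")
      case True then show ?thesis using Me by simp
    next
      case False
      then have tp: "t > 0" using t by simp
      have "e + t *\<^sub>R p = t *\<^sub>R (p + (1/t) *\<^sub>R e)" using tp by (simp add: algebra_simps)
      then have "M (e + t *\<^sub>R p) = t * M (p + (1/t) *\<^sub>R e)" using Mhom[OF tp] by simp
      also have "\<dots> = t * M p" using step1[OF p, of "1/t"] tp by simp
      finally show ?thesis by simp
    qed
  qed
  have gconst: "g k q = g k e" if q: "q \<in> S" for k q
  proof -
    have "c $ k = (\<chi> j. g j q) \<bullet> axis k 1"
    proof (rule dir_lemma[OF Mder[OF q], where a = "c \<bullet> q"])
      have ax: "\<forall>j. 0 \<le> (t *\<^sub>R axis k (1::real)) $ j" if "t \<ge> 0" for t
        using that by (simp add: axis_def)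
      show inS: "q + t *\<^sub>R axis k 1 \<in> S" if "t \<in> {0..1}" for t
        using nn_add[OF q[unfolded S_def] ax] that by (simp add: S_def)
      show "M (q + t *\<^sub>R axis k 1) = c \<bullet> q + t * c $ k" if "t \<in> {0..1}" for t
        using Mlin[OF inS[OF that]] by (simp add: inner_add_right inner_axis)
    qed
    then show ?thesis by (simp add: inner_axis c_def)
  qed
  show ?thesis
  proof (intro allI impI)
    fix k assume "k \<noteq> i"
    show "\<exists>C. \<forall>p\<in>nonneg_nonzero. fk Mz D loss A N k p = fk Mz' D' loss' A' N k p + C"
      by (rule exI[of _ "g k e"]) (use gconst in \<open>fastforce simp: S_def g_def f_def f'_def algebra_simps\<close>)
  qed
qed

end
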